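(* Let $\alpha$ be a nonzero real number and let $\gamma$ be a closed $\alpha$-stationary curve in $\mathbb S^2$ not passing through $N$. (1) If $\gamma$ is contained in the open upper hemisphere $\mathbb S^2_+=\mathbb S^2\cap\{z>0\}$, then $\alpha<0$. (2) If $\gamma$ is contained in the open lower hemisphere $\mathbb S^2_-=\mathbb S^2\cap\{z<0\}$, then $\alpha>0$.
   Context: $\mathbb S^2\subset\mathbb R^3$ is the unit sphere with the Euclidean inner product $\langle,\rangle$. It is parametrized by $\Psi(u,v)=(\sin u\cos v,\sin u\sin v,\cos u)$, and $N=(0,0,1)$. The spherical distance from $\Psi(u,v)$ to $N$ is $u\in[0,\pi]$. For a curve $\gamma(t)=\Psi(u(t),v(t))$, the energy is $$E_\alpha[\gamma]=\int_\gamma\mathsf d^\alpha ds=\int u^\alpha\sqrt{u'^2+\sin^2(u)v'^2}\,dt,$$ where $\mathsf d$ is the distance to $N$. The curve is $\alpha$-stationary if it is a critical point of $E_\alpha$ (Euler–Lagrange equations). Equivalently, its curvature satisfies $\kappa=\alpha\langle\mathbf n,\xi\rangle/\mathsf d$. Here $\mathbf n=(\gamma'\times\gamma)/|\gamma'|$, $\kappa=\langle\gamma'',\mathbf n\rangle/|\gamma'|^2$, and $\xi=\Psi_u$ is the unit tangent of the minimizing geodesic from $N$. Throughout the paper, $\alpha\ne0$ and curves avoid $N$. *)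

theory Defs
  imports "HOL-Analysis.Analysis"
begin

definition NP :: "real^3" where "NP = vector [0, 0, 1]"

text \<open>Spherical distance to N: for p = Psi(u,v) on the sphere, u = arccos (p_3).\<close>
definition sdist :: "real^3 \<Rightarrow> real" where "sdist p = arccos (p $ 3)"

text \<open>xi = Psi_u, unit tangent at p of the minimizing geodesic from N.
  For p = Psi(u,v) with 0 < u < pi one has Psi_u = (p_3 p - N) / sin u and sin u = sqrt(1 - p_3^2).\<close>
definition xi :: "real^3 \<Rightarrow> real^3" where
  "xi p = (1 / sqrt (1 - (p $ 3)^2)) *\<^sub>R ((p $ 3) *\<^sub>R p - NP)"

definition closed_sphere_curve ::
  "(real \<Rightarrow> real^3) \<Rightarrow> (real \<Rightarrow> real^3) \<Rightarrow> (real \<Rightarrow> real^3) \<Rightarrow> real \<Rightarrow> bool" where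
  "closed_sphere_curve g g' g'' L \<longleftrightarrow>
     L > 0 \<and> (\<forall>t. g (t + L) = g t) \<and>
     (\<forall>t. (g has_vector_derivative g' t) (at t)) \<and>
     (\<forall>t. (g' has_vector_derivative g'' t) (at t)) \<and>
     continuous_on UNIV g'' \<and>
     (\<forall>t. g' t \<noteq> 0) \<and>
     (\<forall>t. norm (g t) = 1) \<and> (\<forall>t. g t \<noteq> NP)"

definition unit_normal :: "real^3 \<Rightarrow> real^3 \<Rightarrow> real^3" where
  "unit_normal p v = (1 / norm v) *\<^sub>R cross3 v p"

definition curvature :: "real^3 \<Rightarrow> real^3 \<Rightarrow> real^3 \<Rightarrow> real" where
  "curvature p v a = inner a (unit_normal p v) / (norm v)^2"

text \<open>alpha-stationary: kappa = alpha <n, xi> / d at every point of the curve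
  (where xi is defined, i.e. off the south pole -N).\<close>
definition alpha_stationary ::
  "real \<Rightarrow> (real \<Rightarrow> real^3) \<Rightarrow> (real \<Rightarrow> real^3) \<Rightarrow> (real \<Rightarrow> real^3) \<Rightarrow> bool" where
  "alpha_stationary \<alpha> g g' g'' \<longleftrightarrow>
     (\<forall>t. g t \<noteq> - NP \<longrightarrow>
        curvature (g t) (g' t) (g'' t) =
          \<alpha> * inner (unit_normal (g t) (g' t)) (xi (g t)) / sdist (g t))"

end

theory Submission
  imports Defs
begin

lemma comp_deriv:
  assumes "(g has_vector_derivative v) (at t)"
  shows "((\<lambda>s. g s $ i) has_real_derivative v $ i) (at t)"
proof -
  have "((\<lambda>s. g s $ i) has_derivative (\<lambda>h. (h *\<^sub>R v) $ i)) (at t)"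
    using bounded_linear.has_derivative[OF bounded_linear_vec_nth assms[unfolded has_vector_derivative_def]] .
  moreover have "(\<lambda>h. (h *\<^sub>R v) $ i) = (*) (v $ i)" by (auto simp: fun_eq_iff)
  ultimately show ?thesis unfolding has_field_derivative_def by simp
qed
lemma inner_deriv:
  assumes "(f has_vector_derivative f') (at t)" "(g has_vector_derivative g') (at t)"
  shows "((\<lambda>s. inner (f s) (g s)) has_real_derivative (inner (f t) g' + inner f' (g t))) (at t)"
proof -
  have "((\<lambda>s. inner (f s) (g s)) has_derivative (\<lambda>h. inner (f t) (h *\<^sub>R g') + inner (h *\<^sub>R f') (g t))) (at t)"
    using has_derivative_inner[OF assms[unfolded has_vector_derivative_def]] .
  moreover have "(\<lambda>h. inner (f t) (h *\<^sub>R g') + inner (h *\<^sub>R f') (g t)) = (*) (inner (f t) g' + inner f' (g t))"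
    by (auto simp: fun_eq_iff algebra_simps)
  ultimately show ?thesis unfolding has_field_derivative_def by simp
qed
lemma max_test:
  fixes f f' f'' :: "real \<Rightarrow> real"
  assumes d1: "\<And>t. (f has_real_derivative f' t) (at t)"
    and d2: "\<And>t. (f' has_real_derivative f'' t) (at t)"
    and mx: "\<And>t. f t \<le> f t0"
  shows "f' t0 = 0 \<and> f'' t0 \<le> 0"
proof -
  have z: "f' t0 = 0" using DERIV_local_max[OF d1[of t0], of 1] mx by auto
  moreover have "f'' t0 \<le> 0"
  proof (rule ccontr)
    assume "\<not> f'' t0 \<le> 0"
    then obtain d where d: "d > 0" "\<And>h. h > 0 \<Longrightarrow> h < d \<Longrightarrow> f' t0 < f' (t0 + h)"
      using DERIV_pos_inc_right[OF d2[of t0]] by force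
    obtain c where c: "c > t0" "c < t0 + d/2" "f (t0 + d/2) - f t0 = (t0 + d/2 - t0) * f' c"
      using MVT2[of t0 "t0 + d/2" f f'] d1 d(1) by auto
    have "f' c > 0" using d(2)[of "c - t0"] c z by auto
    then have "d * f' c > 0" using d(1) by simp
    then have "f (t0 + d/2) > f t0" using c by (simp add: algebra_simps)
    with mx show False by (meson not_le)
  qed
  ultimately show ?thesis by blast
qed
lemma periodic_shift:
  assumes "\<And>t. g (t + L) = g t"
  shows "g (s + real_of_int k * L) = g s"
proof (induction k rule: int_induct[where k=0])
  case base then show ?case by simp
next
  case (step1 i) 
  have "g (s + real_of_int (i + 1) * L) = g ((s + real_of_int i * L) + L)" by (simp add: algebra_simps)
  then show ?case using step1 assms by simp
next
  case (step2 i)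
  have "g (s + real_of_int i * L) = g ((s + real_of_int (i - 1) * L) + L)" by (simp add: algebra_simps)
  then show ?case using step2 assms by simp
qed
lemma periodic_max:
  fixes f :: "real \<Rightarrow> real"
  assumes L: "L > 0" and per: "\<And>t. f (t + L) = f t" and c: "continuous_on UNIV f"
  shows "\<exists>t0. \<forall>t. f t \<le> f t0"
proof -
  have c': "continuous_on {0..L} f" using continuous_on_subset[OF c subset_UNIV] .
  have ne: "{0..L} \<noteq> {}" using L by simp
  obtain t0 where t0: "t0 \<in> {0..L}" "\<And>y. y \<in> {0..L} \<Longrightarrow> f y \<le> f t0"
    using continuous_attains_sup[OF compact_Icc ne c'] by blast
  have "f t \<le> f t0" for t
  proof -
    define k where "k = floor (t / L)"
    have k1: "real_of_int k \<le> t / L" unfolding k_def by linarith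
    have k2: "t / L < real_of_int k + 1" unfolding k_def by linarith
    have a1: "real_of_int k * L \<le> t" using k1 L by (simp add: le_divide_eq)
    have a2: "t < (real_of_int k + 1) * L" using k2 L by (simp add: divide_less_eq)
    define s where "s = t - real_of_int k * L"
    have "0 \<le> s" using a1 unfolding s_def by simp
    moreover have "s \<le> L" using a2 unfolding s_def by (simp add: algebra_simps)
    ultimately have sI: "s \<in> {0..L}" by simp
    have "f t = f (s + real_of_int k * L)" unfolding s_def by simp
    also have "\<dots> = f s" using periodic_shift[of f L s k] per by simp
    finally show ?thesis using t0(2)[OF sI] by simp
  qed
  then show ?thesis by blast
qed

lemma e3_lem: fixes p1 p2 p3 v1 v2 a1 a2 a3 :: real
  assumes "p1*p1 + p2*p2 + p3*p3 = 1" "p1 * v1 + p2 * v2 = 0" "p1*a1 + p2*a2 + p3*a3 = - (v1 * v1 + v2 * v2)"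
  shows "a3 * (v1 * v1 + v2 * v2) = - ((v1 * v1 + v2 * v2)^2) * p3 + (a1*(v2*p3) + a2*(- v1*p3) + a3*(v1 * p2 - v2 * p1)) * (v1 * p2 - v2 * p1)"
  using assms by algebra
lemma e4_lem: fixes p1 p2 p3 v1 v2 :: real
  assumes "p1*p1 + p2*p2 + p3*p3 = 1" "p1 * v1 + p2 * v2 = 0"
  shows "(v1 * p2 - v2 * p1)^2 = (v1 * v1 + v2 * v2) * (1 - p3^2)"
  using assms by algebra
lemma s0_lem: fixes z :: real assumes "z < 1" "z > -1" shows "sqrt (1 - z^2) > 0"
proof -
  have "z^2 < 1" using assms by (simp add: abs_square_less_1)
  then show ?thesis by simp
qed

lemma inner3: "inner (x::real^3) y = x$1*y$1 + x$2*y$2 + x$3*y$3"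
  by (simp add: inner_vec_def sum_3)

lemma key:
  fixes p v a :: "real^3" and \<alpha> :: real
  assumes np: "norm p = 1" and pv: "inner p v = 0" and pa: "inner p a = - ((norm v)^2)"
    and v3: "v $ 3 = 0" and vnz: "v \<noteq> 0" and z1: "p$3 < 1" and z2: "p$3 > -1"
    and st: "curvature p v a = \<alpha> * inner (unit_normal p v) (xi p) / sdist p"
  shows "a $ 3 = (norm v)^2 * (- p$3 - \<alpha> * sqrt(1 - (p$3)^2) / sdist p)"
proof -
  define n where "n = norm v"
  define s where "s = sqrt (1 - (p$3)^2)"
  define d where "d = sdist p"
  define z where "z = p$3"
  define w3 where "w3 = v$1 * p$2 - v$2 * p$1"
  define aw where "aw = inner a (cross3 v p)"
  have n0: "n > 0" using vnz unfolding n_def by simp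
  have s0: "s > 0" unfolding s_def z_def using z1 z2
    using s0_lem by blast
  have d0: "d > 0" unfolding d_def sdist_def using z1 z2 arccos_lt_bounded by (metis arccos_1 arccos_less_arccos less_eq_real_def)
  have pp: "p$1*p$1 + p$2*p$2 + p$3*p$3 = 1"
    using np by (metis inner3 norm_eq_1)
  have nn: "n^2 = v$1* v$1 + v$2* v$2" unfolding n_def power2_norm_eq_inner inner3 using v3 by simp
  have pv': "p$1* v$1 + p$2* v$2 = 0" using pv v3 by (simp add: inner3)
  have pa': "p$1*a$1 + p$2*a$2 + p$3*a$3 = - (n^2)" using pa unfolding n_def by (simp add: inner3)
  have aw': "aw = a$1*(v$2*p$3) + a$2*(- v$1*p$3) + a$3*w3"
    unfolding aw_def w3_def by (simp add: inner3 cross3_def v3 algebra_simps)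
  have wp: "inner (cross3 v p) p = 0" by (simp add: dot_cross_self)
  have wN: "inner (cross3 v p) NP = w3" unfolding w3_def NP_def by (simp add: inner3 cross3_def)
  have inx: "inner (unit_normal p v) (xi p) = - w3 / (n * s)"
    unfolding unit_normal_def xi_def s_def[symmetric] n_def[symmetric]
    by (simp add: inner_diff_right wp wN z_def[symmetric])
  have cv: "curvature p v a = aw / n^3"
    unfolding curvature_def unit_normal_def aw_def n_def[symmetric]
    by (simp add: power2_eq_square power3_eq_cube)
  have e1: "aw = - \<alpha> * w3 * n^2 / (s * d)"
    using st unfolding cv inx d_def[symmetric] using n0 s0 d0
    by (simp add: field_simps power2_eq_square power3_eq_cube)
  have e3: "a$3 * n^2 = - ((n^2)^2) * z + aw * w3"
    unfolding aw' nn z_def w3_def using e3_lem[OF pp pv' pa'[unfolded nn]] .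
  have "z^2 < 1" using z1 z2 by (simp add: abs_square_less_1 z_def)
  then have ss: "s^2 = 1 - z^2" unfolding s_def z_def by simp
  have e4: "w3^2 = n^2 * s^2"
    unfolding ss nn w3_def z_def using e4_lem[OF pp pv'] .
  have "s * (a$3 * n^2) = s * (n^2 * (n^2 * (- z - \<alpha> * s / d)))"
    using e3 e1 e4 s0 d0 by (simp add: field_simps power2_eq_square power4_eq_xxxx)
  then have "a$3 * n^2 = n^2 * (n^2 * (- z - \<alpha> * s / d))" using s0 by simp
  moreover have nz: "n^2 \<noteq> 0" using n0 by simp
  ultimately have "a$3 = n^2 * (- z - \<alpha> * s / d)"
    by (metis mult.commute mult_right_cancel)
  then show ?thesis unfolding n_def s_def d_def z_def by simp
qed

lemma pole_cases:
  fixes p :: "real^3"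
  assumes "norm p = 1"
  shows "\<bar>p$3\<bar> \<le> 1" and "p$3 = 1 \<Longrightarrow> p = NP" and "p$3 = -1 \<Longrightarrow> p = - NP"
proof -
  have pp: "p$1*p$1 + p$2*p$2 + p$3*p$3 = 1"
    using assms by (metis inner3 norm_eq_1)
  show "\<bar>p$3\<bar> \<le> 1" using component_le_norm_cart[of p 3] assms by simp
  have "p$3 * p$3 = 1 \<Longrightarrow> p$1 = 0 \<and> p$2 = 0"
  proof -
    assume "p$3 * p$3 = 1"
    then have "p$1*p$1 + p$2*p$2 = 0" using pp by simp
    then show ?thesis by (metis sum_squares_eq_zero_iff)
  qed
  then show "p$3 = 1 \<Longrightarrow> p = NP" and "p$3 = -1 \<Longrightarrow> p = - NP"
    by (auto simp: vec_eq_iff forall_3 NP_def)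
qed

theorem theorem3p4:
  fixes \<alpha> L :: real and \<gamma> \<gamma>' \<gamma>'' :: "real \<Rightarrow> real^3"
  assumes "\<alpha> \<noteq> 0"
    and "closed_sphere_curve \<gamma> \<gamma>' \<gamma>'' L"
    and "alpha_stationary \<alpha> \<gamma> \<gamma>' \<gamma>''"
  shows "((\<forall>t. \<gamma> t $ 3 > 0) \<longrightarrow> \<alpha> < 0) \<and> ((\<forall>t. \<gamma> t $ 3 < 0) \<longrightarrow> \<alpha> > 0)"
proof -
  note cc = assms(2)[unfolded closed_sphere_curve_def]
  have L: "L > 0" and per: "\<And>t. \<gamma> (t + L) = \<gamma> t"
    and d1: "\<And>t. (\<gamma> has_vector_derivative \<gamma>' t) (at t)"
    and d2: "\<And>t. (\<gamma>' has_vector_derivative \<gamma>'' t) (at t)"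
    and vnz: "\<And>t. \<gamma>' t \<noteq> 0" and nrm: "\<And>t. norm (\<gamma> t) = 1" and nN: "\<And>t. \<gamma> t \<noteq> NP"
    using cc by blast+
  note st = assms(3)[unfolded alpha_stationary_def]
  define z where "z t = \<gamma> t $ 3" for t
  define z' where "z' t = \<gamma>' t $ 3" for t
  define z'' where "z'' t = \<gamma>'' t $ 3" for t
  have dz: "(z has_real_derivative z' t) (at t)" for t
    unfolding z_def z'_def by (rule comp_deriv[OF d1])
  have dz2: "(z' has_real_derivative z'' t) (at t)" for t
    unfolding z'_def z''_def by (rule comp_deriv[OF d2])
  have zc: "continuous_on UNIV z"
    using dz DERIV_isCont continuous_at_imp_continuous_on by blast
  have zper: "z (t + L) = z t" for t unfolding z_def using per by simp
  have orth1: "inner (\<gamma> t) (\<gamma>' t) = 0" for t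
  proof -
    have a: "((\<lambda>s. inner (\<gamma> s) (\<gamma> s)) has_real_derivative (inner (\<gamma> t) (\<gamma>' t) + inner (\<gamma>' t) (\<gamma> t))) (at t)"
      by (rule inner_deriv[OF d1 d1])
    have "(\<lambda>s. inner (\<gamma> s) (\<gamma> s)) = (\<lambda>s. 1)" using nrm by (simp add: fun_eq_iff norm_eq_1)
    then have "((\<lambda>s. inner (\<gamma> s) (\<gamma> s)) has_real_derivative 0) (at t)" by simp
    with a have "inner (\<gamma> t) (\<gamma>' t) + inner (\<gamma>' t) (\<gamma> t) = 0" by (rule DERIV_unique)
    then show ?thesis by (simp add: inner_commute)
  qed
  have orth2: "inner (\<gamma> t) (\<gamma>'' t) = - ((norm (\<gamma>' t))^2)" for t
  proof -
    have a: "((\<lambda>s. inner (\<gamma> s) (\<gamma>' s)) has_real_derivative (inner (\<gamma> t) (\<gamma>'' t) + inner (\<gamma>' t) (\<gamma>' t))) (at t)"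
      by (rule inner_deriv[OF d1 d2])
    have "(\<lambda>s. inner (\<gamma> s) (\<gamma>' s)) = (\<lambda>s. 0)" using orth1 by (simp add: fun_eq_iff)
    then have "((\<lambda>s. inner (\<gamma> s) (\<gamma>' s)) has_real_derivative 0) (at t)" by simp
    with a have "inner (\<gamma> t) (\<gamma>'' t) + inner (\<gamma>' t) (\<gamma>' t) = 0" by (rule DERIV_unique)
    then show ?thesis by (simp add: power2_norm_eq_inner)
  qed
  have lt1: "z t < 1" for t
    using pole_cases[OF nrm[of t]] nN[of t] unfolding z_def by force
  have app: "z'' t = (norm (\<gamma>' t))^2 * (- z t - \<alpha> * sqrt(1 - (z t)^2) / sdist (\<gamma> t))"
    if "z' t = 0" "z t > -1" for t
  proof -
    have "\<gamma> t \<noteq> - NP" using that(2) unfolding z_def NP_def by auto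
    note S = st[rule_format, OF this]
    show ?thesis unfolding z''_def z_def
      by (rule key[OF nrm orth1 orth2 that(1)[unfolded z'_def] vnz lt1[unfolded z_def] that(2)[unfolded z_def] S])
  qed
  have sd: "sqrt(1 - (z t)^2) > 0 \<and> sdist (\<gamma> t) > 0" if "z t > -1" for t
  proof
    show "sqrt(1 - (z t)^2) > 0" using s0_lem[OF lt1 that] .
    have "arccos 1 < arccos (z t)" using arccos_less_arccos[of "z t" 1] that lt1[of t] by simp
    then show "sdist (\<gamma> t) > 0" unfolding sdist_def z_def by simp
  qed
  have part1: "\<alpha> < 0" if pos: "\<forall>t. z t > 0"
  proof -
    obtain t0 where t0: "\<And>t. - z t \<le> - z t0"
    proof -
      have "\<exists>t0. \<forall>t. - z t \<le> - z t0"
        by (rule periodic_max[OF L _ continuous_on_minus[OF zc]]) (simp add: zper)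
      then show ?thesis using that by blast
    qed
    have "- z' t0 = 0 \<and> - z'' t0 \<le> 0"
      using max_test[of "\<lambda>t. - z t" "\<lambda>t. - z' t" "\<lambda>t. - z'' t" t0] dz dz2 t0
      by (auto intro: derivative_intros)
    then have h: "z' t0 = 0" "z'' t0 \<ge> 0" by auto
    have zg: "z t0 > -1" using pos[rule_format, of t0] by simp
    have e: "z'' t0 = (norm (\<gamma>' t0))^2 * (- z t0 - \<alpha> * sqrt(1 - (z t0)^2) / sdist (\<gamma> t0))"
      using app[OF h(1) zg] .
    have n0: "(norm (\<gamma>' t0))^2 > 0" using vnz by simp
    have "- z t0 - \<alpha> * sqrt(1 - (z t0)^2) / sdist (\<gamma> t0) \<ge> 0"
    proof -
      have "0 \<le> (norm (\<gamma>' t0))^2 * (- z t0 - \<alpha> * sqrt(1 - (z t0)^2) / sdist (\<gamma> t0))"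
        using h(2) e by simp
      then show ?thesis using n0 zero_le_mult_iff by (simp add: zero_le_mult_iff)
    qed
    moreover have "\<alpha> \<ge> 0 \<Longrightarrow> \<alpha> * sqrt(1 - (z t0)^2) / sdist (\<gamma> t0) \<ge> 0"
      using sd[OF zg] by simp
    ultimately show ?thesis using pos[rule_format, of t0]
    proof -
      assume A: "0 \<le> - z t0 - \<alpha> * sqrt (1 - (z t0)^2) / sdist (\<gamma> t0)"
        and B: "0 \<le> \<alpha> \<Longrightarrow> 0 \<le> \<alpha> * sqrt (1 - (z t0)^2) / sdist (\<gamma> t0)"
        and C: "0 < z t0"
      show ?thesis
      proof (rule ccontr)
        assume "\<not> \<alpha> < 0"
        then have "0 \<le> \<alpha> * sqrt (1 - (z t0)^2) / sdist (\<gamma> t0)" using B by simp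
        then show False using A C by linarith
      qed
    qed
  qed
  have part2: "\<alpha> > 0" if neg: "\<forall>t. z t < 0"
  proof -
    obtain t0 where t0: "\<And>t. z t \<le> z t0"
    proof -
      have "\<exists>t0. \<forall>t. z t \<le> z t0"
        by (rule periodic_max[OF L zper zc])
      then show ?thesis using that by blast
    qed
    have h: "z' t0 = 0" "z'' t0 \<le> 0"
      using max_test[of z z' z'' t0] dz dz2 t0 by auto
    have zg: "z t0 > -1"
    proof (rule ccontr)
      assume "\<not> z t0 > -1"
      then have "z t = -1" for t
      proof -
        have "\<bar>z t\<bar> \<le> 1" using pole_cases(1)[OF nrm[of t]] unfolding z_def .
        then show ?thesis using t0[of t] \<open>\<not> z t0 > -1\<close> by (simp add: abs_le_iff)
      qed
      then have "\<gamma> t = - NP" for t using pole_cases(3)[OF nrm[of t]] unfolding z_def by simp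
      then have "\<gamma> = (\<lambda>_. - NP)" by auto
      then have "(\<gamma> has_vector_derivative 0) (at t0)" by simp
      then have "\<gamma>' t0 = 0" using vector_derivative_unique_at[OF d1[of t0]] by blast
      with vnz show False by blast
    qed
    have e: "z'' t0 = (norm (\<gamma>' t0))^2 * (- z t0 - \<alpha> * sqrt(1 - (z t0)^2) / sdist (\<gamma> t0))"
      using app[OF h(1) zg] .
    have n0: "(norm (\<gamma>' t0))^2 > 0" using vnz by simp
    have "- z t0 - \<alpha> * sqrt(1 - (z t0)^2) / sdist (\<gamma> t0) \<le> 0"
    proof -
      have "(norm (\<gamma>' t0))^2 * (- z t0 - \<alpha> * sqrt(1 - (z t0)^2) / sdist (\<gamma> t0)) \<le> 0"
        using h(2) e by simp
      then show ?thesis using n0 by (simp add: mult_le_0_iff)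
    qed
    moreover have "\<alpha> \<le> 0 \<Longrightarrow> \<alpha> * sqrt(1 - (z t0)^2) / sdist (\<gamma> t0) \<le> 0"
      using sd[OF zg] by (simp add: mult_nonpos_nonneg divide_nonpos_pos)
    ultimately show ?thesis using neg[rule_format, of t0]
    proof -
      assume A: "- z t0 - \<alpha> * sqrt (1 - (z t0)^2) / sdist (\<gamma> t0) \<le> 0"
        and B: "\<alpha> \<le> 0 \<Longrightarrow> \<alpha> * sqrt (1 - (z t0)^2) / sdist (\<gamma> t0) \<le> 0"
        and C: "z t0 < 0"
      show ?thesis
      proof (rule ccontr)
        assume "\<not> \<alpha> > 0"
        then have "\<alpha> * sqrt (1 - (z t0)^2) / sdist (\<gamma> t0) \<le> 0" using B by simp
        then show False using A C by linarith
      qed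
    qed
  qed
  show ?thesis using part1 part2 unfolding z_def by blast
qed

end
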